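(* Let $S$ be an independent set of $M$ and $F=\mathrm{cl}(S)$. If $G$ is a hyperplane of $M^\perp$ with $F\cup G\neq E$, then $F\cup G\cup P(S)\neq E$.
   Context: Let $M$ be a matroid with no loops and no coloops on the ground set $E=\{0,1,\dots,n\}$, totally ordered by the usual order of integers; $M^\perp$ its dual, $\mathrm{cl}$ the closure operator of $M$. For an independent set $S$ of $M$, $P(S)=\{e\in E-S:\ \text{there is a cocircuit } C^\perp \text{ of } M \text{ with } C^\perp\subseteq E-S \text{ and } e=\min C^\perp\}$; it is known that $S\sqcup P(S)$ is the lexicographically smallest basis of $M$ containing $S$. *)

theory Defs
  imports Main
begin

definition matroid :: "'a set \<Rightarrow> ('a set \<Rightarrow> bool) \<Rightarrow> bool" where
  "matroid E indep \<longleftrightarrow> finite E \<and> indep {} \<and>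
     (\<forall>X. indep X \<longrightarrow> X \<subseteq> E) \<and>
     (\<forall>X Y. indep Y \<and> X \<subseteq> Y \<longrightarrow> indep X) \<and>
     (\<forall>X Y. indep X \<and> indep Y \<and> card X < card Y \<longrightarrow> (\<exists>e\<in>Y - X. indep (insert e X)))"

definition basis :: "('a set \<Rightarrow> bool) \<Rightarrow> 'a set \<Rightarrow> bool" where
  "basis indep B \<longleftrightarrow> indep B \<and> (\<forall>X. indep X \<and> B \<subseteq> X \<longrightarrow> X = B)"

definition dual_indep :: "'a set \<Rightarrow> ('a set \<Rightarrow> bool) \<Rightarrow> 'a set \<Rightarrow> bool" where
  "dual_indep E indep X \<longleftrightarrow> X \<subseteq> E \<and> (\<exists>B. basis indep B \<and> X \<inter> B = {})"

definition circuit :: "'a set \<Rightarrow> ('a set \<Rightarrow> bool) \<Rightarrow> 'a set \<Rightarrow> bool" where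
  "circuit E indep C \<longleftrightarrow> C \<subseteq> E \<and> \<not> indep C \<and> (\<forall>X. X \<subset> C \<longrightarrow> indep X)"

definition cocircuit :: "'a set \<Rightarrow> ('a set \<Rightarrow> bool) \<Rightarrow> 'a set \<Rightarrow> bool" where
  "cocircuit E indep C \<longleftrightarrow> circuit E (dual_indep E indep) C"

definition mrank :: "('a set \<Rightarrow> bool) \<Rightarrow> 'a set \<Rightarrow> nat" where
  "mrank indep X = Max (card ` {Y. Y \<subseteq> X \<and> indep Y})"

definition mcl :: "'a set \<Rightarrow> ('a set \<Rightarrow> bool) \<Rightarrow> 'a set \<Rightarrow> 'a set" where
  "mcl E indep X = {e \<in> E. mrank indep (insert e X) = mrank indep X}"

definition flat :: "'a set \<Rightarrow> ('a set \<Rightarrow> bool) \<Rightarrow> 'a set \<Rightarrow> bool" where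
  "flat E indep F \<longleftrightarrow> F \<subseteq> E \<and> mcl E indep F = F"

definition hyperplane :: "'a set \<Rightarrow> ('a set \<Rightarrow> bool) \<Rightarrow> 'a set \<Rightarrow> bool" where
  "hyperplane E indep H \<longleftrightarrow> flat E indep H \<and> H \<noteq> E \<and>
     (\<forall>K. flat E indep K \<and> H \<subseteq> K \<longrightarrow> K = H \<or> K = E)"

definition loop :: "'a set \<Rightarrow> ('a set \<Rightarrow> bool) \<Rightarrow> 'a \<Rightarrow> bool" where
  "loop E indep e \<longleftrightarrow> e \<in> E \<and> \<not> indep {e}"

definition coloop :: "'a set \<Rightarrow> ('a set \<Rightarrow> bool) \<Rightarrow> 'a \<Rightarrow> bool" where
  "coloop E indep e \<longleftrightarrow> e \<in> E \<and> (\<forall>B. basis indep B \<longrightarrow> e \<in> B)"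

definition Pset :: "'a::linorder set \<Rightarrow> ('a set \<Rightarrow> bool) \<Rightarrow> 'a set \<Rightarrow> 'a set" where
  "Pset E indep S = {e \<in> E - S. \<exists>C. cocircuit E indep C \<and> C \<subseteq> E - S \<and> e = Min C}"

end

theory Submission
  imports Defs
begin

lemma mat_fin: "matroid E indep \<Longrightarrow> finite E"
  by (simp add: matroid_def)
lemma mat_empty: "matroid E indep \<Longrightarrow> indep {}"
  by (simp add: matroid_def)
lemma mat_sub: "matroid E indep \<Longrightarrow> indep X \<Longrightarrow> X \<subseteq> E"
  by (simp add: matroid_def)
lemma mat_down: "matroid E indep \<Longrightarrow> indep Y \<Longrightarrow> X \<subseteq> Y \<Longrightarrow> indep X"
  unfolding matroid_def by blast
lemma mat_finI: "matroid E indep \<Longrightarrow> indep X \<Longrightarrow> finite X"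
  unfolding matroid_def using finite_subset by metis
lemma mat_aug: "matroid E indep \<Longrightarrow> indep X \<Longrightarrow> indep Y \<Longrightarrow> card X < card Y \<Longrightarrow> \<exists>e\<in>Y - X. indep (insert e X)"
  unfolding matroid_def by blast

lemma basis_card_ge:
  assumes M: "matroid E indep" and B: "basis indep B" and J: "indep J" and c: "card B \<le> card J"
  shows "basis indep J"
  unfolding basis_def
proof (intro conjI allI impI)
  show "indep J" by fact
  fix X assume X: "indep X \<and> J \<subseteq> X"
  show "X = J"
  proof (rule ccontr)
    assume "X \<noteq> J"
    hence "J \<subset> X" using X by blast
    moreover have "finite X" using X mat_finI[OF M] by blast
    ultimately have "card J < card X" by (simp add: psubset_card_mono)
    hence "card B < card X" using c by simp
    moreover have "indep B" using B unfolding basis_def by simp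
    ultimately obtain x where x: "x \<in> X - B" "indep (insert x B)" using mat_aug[OF M _ conjunct1[OF X]] by blast
    hence "insert x B = B" using B unfolding basis_def by blast
    thus False using x by blast
  qed
qed

lemma aug_basis:
  assumes M: "matroid E indep" and I: "indep I" and B: "basis indep B"
  shows "\<exists>J. basis indep J \<and> I \<subseteq> J \<and> J \<subseteq> I \<union> B"
proof -
  define Fm where "Fm = {J. indep J \<and> I \<subseteq> J \<and> J \<subseteq> I \<union> B}"
  have IB: "I \<union> B \<subseteq> E" using mat_sub[OF M I] mat_sub[OF M, of B] B unfolding basis_def by blast
  have fin: "finite Fm" unfolding Fm_def
    by (rule finite_subset[of _ "Pow (I \<union> B)"]) (use finite_subset[OF IB mat_fin[OF M]] in auto)
  have ne: "I \<in> Fm" using I unfolding Fm_def by auto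
  define m where "m = Max (card ` Fm)"
  have "m \<in> card ` Fm" unfolding m_def using fin ne by (intro Max_in) auto
  then obtain J where J: "J \<in> Fm" "card J = m" by auto
  have mx: "\<And>J'. J' \<in> Fm \<Longrightarrow> card J' \<le> m" unfolding m_def using fin by auto
  have "card B \<le> card J"
  proof (rule ccontr)
    assume "\<not> card B \<le> card J"
    hence "card J < card B" by simp
    moreover have "indep B" using B unfolding basis_def by simp
    moreover have "indep J" using J unfolding Fm_def by simp
    ultimately obtain x where x: "x \<in> B - J" "indep (insert x J)" using mat_aug[OF M] by blast
    have "insert x J \<in> Fm" using x J unfolding Fm_def by auto
    hence "card (insert x J) \<le> m" by (rule mx)
    moreover have "finite J" using J mat_finI[OF M] unfolding Fm_def by blast
    ultimately show False using x J by simp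
  qed
  moreover have "indep J" using J unfolding Fm_def by simp
  ultimately have "basis indep J" using basis_card_ge[OF M B] by blast
  thus ?thesis using J unfolding Fm_def by blast
qed

lemma basis_exists:
  assumes M: "matroid E indep" shows "\<exists>B. basis indep B"
proof -
  define Fm where "Fm = {J. indep J}"
  have fin: "finite Fm" unfolding Fm_def
    by (rule finite_subset[of _ "Pow E"]) (use M mat_sub mat_fin in auto)
  have ne: "{} \<in> Fm" using mat_empty[OF M] unfolding Fm_def by auto
  define m where "m = Max (card ` Fm)"
  have "m \<in> card ` Fm" unfolding m_def using fin ne by (intro Max_in) auto
  then obtain J where J: "J \<in> Fm" "card J = m" by auto
  have mx: "\<And>J'. J' \<in> Fm \<Longrightarrow> card J' \<le> m" unfolding m_def using fin by auto
  have "basis indep J" unfolding basis_def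
  proof (intro conjI allI impI)
    show "indep J" using J Fm_def by auto
    fix X assume X: "indep X \<and> J \<subseteq> X"
    show "X = J"
    proof (rule ccontr)
      assume "X \<noteq> J"
      hence "J \<subset> X" using X by blast
      moreover have "finite X" using X mat_finI[OF M] by blast
      ultimately have "card J < card X" by (simp add: psubset_card_mono)
      moreover have "card X \<le> m" using X mx Fm_def by auto
      ultimately show False using J by simp
    qed
  qed
  thus ?thesis by blast
qed

lemma min_dep_circuit:
  assumes M: "matroid E indep" and X: "X \<subseteq> E" and d: "\<not> indep X"
  shows "\<exists>C\<subseteq>X. circuit E indep C"
proof -
  define Fm where "Fm = {Y. Y \<subseteq> X \<and> \<not> indep Y}"
  have fin: "finite Fm" unfolding Fm_def
    by (rule finite_subset[of _ "Pow X"]) (use finite_subset[OF X mat_fin[OF M]] in auto)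
  have ne: "X \<in> Fm" using d unfolding Fm_def by auto
  define m where "m = Min (card ` Fm)"
  have "m \<in> card ` Fm" unfolding m_def using fin ne by (intro Min_in) auto
  then obtain C where C: "C \<in> Fm" "card C = m" by auto
  have mn: "\<And>J'. J' \<in> Fm \<Longrightarrow> m \<le> card J'" unfolding m_def using fin by auto
  have finC: "finite C" using C finite_subset[OF X mat_fin[OF M]] finite_subset unfolding Fm_def by blast
  have "circuit E indep C" unfolding circuit_def
  proof (intro conjI allI impI)
    show "C \<subseteq> E" using C X Fm_def by auto
    show "\<not> indep C" using C Fm_def by auto
    fix Y assume Y: "Y \<subset> C"
    show "indep Y"
    proof (rule ccontr)
      assume "\<not> indep Y"
      hence "Y \<in> Fm" using Y C Fm_def by auto
      hence "m \<le> card Y" by (rule mn)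
      moreover have "card Y < card C" using Y finC psubset_card_mono by blast
      ultimately show False using C by simp
    qed
  qed
  thus ?thesis using C unfolding Fm_def by blast
qed

lemma mrank_indep:
  assumes M: "matroid E indep" and I: "indep X"
  shows "mrank indep X = card X"
proof -
  have fX: "finite X" using mat_finI[OF M I] .
  have fin: "finite {Y. Y \<subseteq> X \<and> indep Y}" by (rule finite_subset[of _ "Pow X"]) (use fX in auto)
  have "Max (card ` {Y. Y \<subseteq> X \<and> indep Y}) = card X"
  proof (rule Max_eqI)
    show "finite (card ` {Y. Y \<subseteq> X \<and> indep Y})" using fin by auto
    show "\<And>y. y \<in> card ` {Y. Y \<subseteq> X \<and> indep Y} \<Longrightarrow> y \<le> card X" using fX card_mono by auto
    show "card X \<in> card ` {Y. Y \<subseteq> X \<and> indep Y}" using I by auto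
  qed
  thus ?thesis unfolding mrank_def .
qed

lemma orth:
  assumes M: "matroid E indep" and C: "circuit E indep C" and D: "cocircuit E indep D"
    and CD: "C \<inter> D = {e}"
  shows False
proof -
  have D': "D \<subseteq> E" "\<not> dual_indep E indep D" "\<And>X. X \<subset> D \<Longrightarrow> dual_indep E indep X"
    using D unfolding cocircuit_def circuit_def by auto
  have "D - {e} \<subset> D" using CD by auto
  then obtain B where B: "basis indep B" "(D - {e}) \<inter> B = {}" using D'(3) unfolding dual_indep_def by blast
  have "C - {e} \<subset> C" using CD by auto
  hence "indep (C - {e})" using C unfolding circuit_def by blast
  then obtain J where J: "basis indep J" "C - {e} \<subseteq> J" "J \<subseteq> (C - {e}) \<union> B"
    using aug_basis[OF M _ B(1)] by blast
  have "e \<notin> J"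
  proof
    assume "e \<in> J" hence "C \<subseteq> J" using J by auto
    hence "indep C" using mat_down[OF M] J(1) unfolding basis_def by blast
    thus False using C unfolding circuit_def by blast
  qed
  hence "D \<inter> J = {}" using J B CD by auto
  thus False using D' J unfolding dual_indep_def by blast
qed

lemma cocirc_cl:
  assumes M: "matroid E indep" and D: "cocircuit E indep D" and DS: "D \<inter> S = {}"
    and S: "indep S" and x: "x \<in> D" and xc: "x \<in> mcl E indep S"
  shows False
proof -
  have D': "D \<subseteq> E" "\<not> dual_indep E indep D" "\<And>X. X \<subset> D \<Longrightarrow> dual_indep E indep X"
    using D unfolding cocircuit_def circuit_def by auto
  have nd: "\<not> indep (insert x S)"
  proof
    assume "indep (insert x S)"
    hence "mrank indep (insert x S) = card (insert x S)" using mrank_indep[OF M] by blast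
    moreover have "finite S" using mat_finI[OF M S] .
    moreover have "x \<notin> S" using x DS by auto
    ultimately have "mrank indep (insert x S) = card S + 1" by simp
    moreover have "mrank indep (insert x S) = mrank indep S" using xc unfolding mcl_def by auto
    ultimately show False using mrank_indep[OF M S] by simp
  qed
  have "D - {x} \<subset> D" using x by auto
  then obtain B where B: "basis indep B" "(D - {x}) \<inter> B = {}" using D'(3) unfolding dual_indep_def by blast
  obtain J where J: "basis indep J" "S \<subseteq> J" "J \<subseteq> S \<union> B"
    using aug_basis[OF M S B(1)] by blast
  have "x \<notin> J"
  proof
    assume "x \<in> J" hence "insert x S \<subseteq> J" using J by auto
    hence "indep (insert x S)" using mat_down[OF M] J(1) unfolding basis_def by blast
    thus False using nd by blast
  qed
  hence "D \<inter> J = {}" using J B DS by auto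
  thus False using D' J unfolding dual_indep_def by blast
qed

lemma flat_circuit:
  assumes M: "matroid E indep" and G: "flat E (dual_indep E indep) G" and e: "e \<in> E" "e \<notin> G"
  shows "\<exists>C. circuit E indep C \<and> e \<in> C \<and> C \<inter> G = {}"
proof (rule ccontr)
  assume H: "\<not> ?thesis"
  let ?I = "dual_indep E indep"
  have GE: "G \<subseteq> E" using G unfolding flat_def by auto
  have fE: "finite E" using M mat_fin by auto
  obtain B0 where "basis indep B0" using basis_exists[OF M] by blast
  hence I0: "?I {}" unfolding dual_indep_def by auto
  define A where "A X = {Y. Y \<subseteq> X \<and> ?I Y}" for X
  have finA: "finite (A X)" if "X \<subseteq> E" for X
    unfolding A_def by (rule finite_subset[of _ "Pow X"]) (use finite_subset[OF that fE] in auto)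
  have key: "card Y \<le> mrank ?I G" if Y: "Y \<in> A (insert e G)" for Y
  proof -
    have mx: "card Y' \<le> mrank ?I G" if "Y' \<in> A G" for Y'
      using finA[OF GE] that unfolding mrank_def A_def by auto
    show ?thesis
    proof (cases "e \<in> Y")
      case False
      hence "Y \<in> A G" using Y False unfolding A_def by auto
      thus ?thesis by (rule mx)
    next
      case True
      from Y obtain B where B: "basis indep B" "Y \<inter> B = {}" and YE: "Y \<subseteq> E" and YG: "Y \<subseteq> insert e G"
        unfolding A_def dual_indep_def by auto
      have eB: "e \<notin> B" using True B by auto
      have "\<not> indep (insert e B)" using B eB unfolding basis_def by blast
      moreover have "insert e B \<subseteq> E" using e mat_sub[OF M, of B] B unfolding basis_def by blast
      ultimately obtain C where C: "C \<subseteq> insert e B" "circuit E indep C"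
        using min_dep_circuit[OF M] by blast
      have eC: "e \<in> C"
      proof (rule ccontr)
        assume "e \<notin> C" hence "C \<subseteq> B" using C by auto
        hence "indep C" using mat_down[OF M] B(1) unfolding basis_def by blast
        thus False using C(2) unfolding circuit_def by blast
      qed
      then obtain d where d: "d \<in> C" "d \<in> G" using H C by blast
      have de: "d \<noteq> e" using d e by auto
      have dB: "d \<in> B" using d C de by auto
      have "C - {d} \<subset> C" using d by auto
      hence "indep (C - {d})" using C(2) unfolding circuit_def by blast
      then obtain J where J: "basis indep J" "C - {d} \<subseteq> J" "J \<subseteq> (C - {d}) \<union> B"
        using aug_basis[OF M _ B(1)] by blast
      have "d \<notin> J"
      proof
        assume "d \<in> J" hence "C \<subseteq> J" using J by auto
        hence "indep C" using mat_down[OF M] J(1) unfolding basis_def by blast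
        thus False using C(2) unfolding circuit_def by blast
      qed
      define Y' where "Y' = insert d (Y - {e})"
      have "Y' \<inter> J = {}" using J C B \<open>d \<notin> J\<close> unfolding Y'_def by auto
      moreover have "Y' \<subseteq> E" using YE d GE Y'_def by auto
      moreover have "Y' \<subseteq> G" using YG d Y'_def by auto
      ultimately have "Y' \<in> A G" unfolding A_def dual_indep_def using J by blast
      hence "card Y' \<le> mrank ?I G" by (rule mx)
      moreover have "finite Y" using finite_subset[OF YE fE] .
      moreover have "d \<notin> Y" using dB B by auto
      ultimately show ?thesis using True unfolding Y'_def by (simp add: card_Diff_singleton)
    qed
  qed
  have le1: "mrank ?I (insert e G) \<le> mrank ?I G"
    unfolding mrank_def[of _ "insert e G"]
    using finA[of "insert e G"] e GE I0 key A_def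
    by (subst Max_le_iff) auto
  have le2: "mrank ?I G \<le> mrank ?I (insert e G)"
    unfolding mrank_def
    apply (rule Max_mono)
    using finA[of "insert e G"] e GE I0 A_def by auto
  have "e \<in> mcl E ?I G" unfolding mcl_def using le1 le2 e by auto
  thus False using G e unfolding flat_def by auto
qed

theorem mainTheorem16:
  fixes n :: nat and indep :: "nat set \<Rightarrow> bool" and S G :: "nat set"
  assumes "matroid {0..n} indep"
    and "\<forall>e\<in>{0..n}. \<not> loop {0..n} indep e"
    and "\<forall>e\<in>{0..n}. \<not> coloop {0..n} indep e"
    and "indep S"
    and "hyperplane {0..n} (dual_indep {0..n} indep) G"
    and "mcl {0..n} indep S \<union> G \<noteq> {0..n}"
  shows "mcl {0..n} indep S \<union> G \<union> Pset {0..n} indep S \<noteq> {0..n}"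
proof
  let ?E = "{0..n}"
  let ?F = "mcl {0..n} indep S"
  assume eq: "?F \<union> G \<union> Pset ?E indep S = ?E"
  note M = assms(1)
  have Gf: "flat ?E (dual_indep ?E indep) G" using assms(5) unfolding hyperplane_def by auto
  have GE: "G \<subseteq> ?E" using Gf unfolding flat_def by auto
  have FE: "?F \<subseteq> ?E" unfolding mcl_def by auto
  define R where "R = ?E - (?F \<union> G)"
  have Rne: "R \<noteq> {}" using assms(6) FE GE R_def by auto
  have Rf: "finite R" using R_def by auto
  define e where "e = Max R"
  have eR: "e \<in> R" unfolding e_def using Rne Rf by auto
  have emax: "\<And>c. c \<in> R \<Longrightarrow> c \<le> e" unfolding e_def using Rf by auto
  have "e \<in> Pset ?E indep S" using eR eq R_def by auto
  then obtain D where D: "cocircuit ?E indep D" "D \<subseteq> ?E - S" "e = Min D"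
    unfolding Pset_def by blast
  have DE: "D \<subseteq> ?E" using D by auto
  have Dne: "D \<noteq> {}"
  proof
    assume "D = {}"
    moreover obtain B0 where "basis indep B0" using basis_exists[OF M] by blast
    ultimately have "dual_indep ?E indep D" unfolding dual_indep_def by auto
    thus False using D(1) unfolding cocircuit_def circuit_def by auto
  qed
  have fD: "finite D" using DE finite_subset by blast
  have eD: "e \<in> D" using D(3) Dne fD by auto
  have emin: "\<And>d. d \<in> D \<Longrightarrow> e \<le> d" using D(3) fD by auto
  obtain C where C: "circuit ?E indep C" "e \<in> C" "C \<inter> G = {}"
    using flat_circuit[OF M Gf] eR R_def by blast
  have "C \<inter> D = {e}"
  proof (intro equalityI subsetI)
    fix c assume c: "c \<in> C \<inter> D"
    have "c \<notin> ?F"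
    proof
      assume "c \<in> ?F"
      thus False using cocirc_cl[OF M D(1) _ assms(4), of c] D(2) c by auto
    qed
    hence "c \<in> R" using c C DE R_def by auto
    hence "c \<le> e" by (rule emax)
    moreover have "e \<le> c" using c emin by auto
    ultimately show "c \<in> {e}" by simp
  next
    fix c assume "c \<in> {e}" thus "c \<in> C \<inter> D" using C eD by auto
  qed
  thus False using orth[OF M C(1) D(1)] by blast
qed

end
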